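(* Let $N=2^\ell$ ($\ell$ a positive integer), $C_2\subseteq C_1\subseteq\mathbb{F}_2^n$ linear codes, $y_x,y_z\in\mathbb{F}_2^n$, and $Q=Q(C_1,C_2,y_x,y_z)$. For $b\in\mathbb{Z}_N^n$ let $b_{y_z}\in\mathbb{Z}_N^n$ be given by $(b_{y_z})_i=b_i$ if $(y_z)_i=0$ and $(b_{y_z})_i=-b_i$ if $(y_z)_i=1$. Then $U(b)$ fixes $Q$ (i.e. $U(b)Q=Q$) if and only if $U(b_{y_z})$ fixes $Q'=Q(C_1,C_2,0,0)$.
   Context: $\omega=e^{2\pi\mathbf{i}/N}$; for $a\in\mathbb{Z}_N$, $U(a)=\mathrm{diag}(1,\omega^a)$ in the computational basis $\{|0\rangle,|1\rangle\}$ of $\mathbb{C}^2$, and $U(b)=\bigotimes_{i=1}^nU(b_i)$ on $(\mathbb{C}^2)^{\otimes n}$. With $X,Z$ the Pauli matrices and $X(u)=\bigotimes X^{u_i}$, $Z(v)=\bigotimes Z^{v_i}$, the CSS code $Q(C_1,C_2,y_x,y_z)$ is the subspace of $(\mathbb{C}^2)^{\otimes n}$ stabilized by all operators $(-1)^{y_x\cdot u+y_z\cdot v}X(u)Z(v)$ with $u\in C_2$, $v\in C_1^\perp$. *)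

theory Defs
  imports Complex_Main
begin

text \<open>Vectors of F_2^n are functions nat \<Rightarrow> bool (True = 1) vanishing at indices \<ge> n.
  States of (C^2)^{\<otimes>n} are coefficient functions on the computational basis
  {|x\<rangle> : x \<in> F_2^n}, i.e. maps (nat \<Rightarrow> bool) \<Rightarrow> complex vanishing off bvec n.\<close>

definition bvec :: "nat \<Rightarrow> (nat \<Rightarrow> bool) set" where
  "bvec n = {x. \<forall>i. n \<le> i \<longrightarrow> \<not> x i}"

definition bxor :: "(nat \<Rightarrow> bool) \<Rightarrow> (nat \<Rightarrow> bool) \<Rightarrow> (nat \<Rightarrow> bool)" where
  "bxor x y = (\<lambda>i. x i \<noteq> y i)"

definition bdot :: "nat \<Rightarrow> (nat \<Rightarrow> bool) \<Rightarrow> (nat \<Rightarrow> bool) \<Rightarrow> bool" where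
  "bdot n x y = odd (card {i. i < n \<and> x i \<and> y i})"

definition linear_code :: "nat \<Rightarrow> (nat \<Rightarrow> bool) set \<Rightarrow> bool" where
  "linear_code n C \<longleftrightarrow> C \<subseteq> bvec n \<and> (\<lambda>_. False) \<in> C \<and> (\<forall>x\<in>C. \<forall>y\<in>C. bxor x y \<in> C)"

definition dual_code :: "nat \<Rightarrow> (nat \<Rightarrow> bool) set \<Rightarrow> (nat \<Rightarrow> bool) set" where
  "dual_code n C = {v \<in> bvec n. \<forall>c\<in>C. \<not> bdot n v c}"

definition sgn_bool :: "bool \<Rightarrow> complex" where
  "sgn_bool b = (if b then -1 else 1)"

definition hspace :: "nat \<Rightarrow> ((nat \<Rightarrow> bool) \<Rightarrow> complex) set" where
  "hspace n = {\<psi>. \<forall>x. x \<notin> bvec n \<longrightarrow> \<psi> x = 0}"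

text \<open>Action of (-1)^{y_x\<cdot>u + y_z\<cdot>v} X(u) Z(v): since X(u)Z(v)|x\<rangle> = (-1)^{v\<cdot>x}|x+u\<rangle>,
  the new coefficient at y is (-1)^{v\<cdot>(y+u)} times the old coefficient at y+u.\<close>
definition stab_op :: "nat \<Rightarrow> (nat \<Rightarrow> bool) \<Rightarrow> (nat \<Rightarrow> bool) \<Rightarrow> (nat \<Rightarrow> bool) \<Rightarrow> (nat \<Rightarrow> bool)
    \<Rightarrow> ((nat \<Rightarrow> bool) \<Rightarrow> complex) \<Rightarrow> ((nat \<Rightarrow> bool) \<Rightarrow> complex)" where
  "stab_op n yx yz u v \<psi> = (\<lambda>y. if y \<in> bvec n then
      sgn_bool (bdot n yx u \<noteq> bdot n yz v) * sgn_bool (bdot n v (bxor y u)) * \<psi> (bxor y u)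
     else 0)"

definition css_code :: "nat \<Rightarrow> (nat \<Rightarrow> bool) set \<Rightarrow> (nat \<Rightarrow> bool) set \<Rightarrow> (nat \<Rightarrow> bool) \<Rightarrow> (nat \<Rightarrow> bool)
    \<Rightarrow> ((nat \<Rightarrow> bool) \<Rightarrow> complex) set" where
  "css_code n C1 C2 yx yz = {\<psi> \<in> hspace n. \<forall>u\<in>C2. \<forall>v\<in>dual_code n C1. stab_op n yx yz u v \<psi> = \<psi>}"

definition omega :: "nat \<Rightarrow> complex" where
  "omega N = cis (2 * pi / real N)"

text \<open>U(b) = \<Otimes> diag(1, \<omega>^{b_i}); elements of Z_N are represented by integers
  (U(b) depends only on b mod N).\<close>
definition U_op :: "nat \<Rightarrow> nat \<Rightarrow> (nat \<Rightarrow> int) \<Rightarrow> ((nat \<Rightarrow> bool) \<Rightarrow> complex) \<Rightarrow> ((nat \<Rightarrow> bool) \<Rightarrow> complex)" where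
  "U_op N n b \<psi> = (\<lambda>x. omega N powi (\<Sum>i\<in>{i. i < n \<and> x i}. b i) * \<psi> x)"

definition b_flip :: "nat \<Rightarrow> (nat \<Rightarrow> int) \<Rightarrow> (nat \<Rightarrow> bool) \<Rightarrow> (nat \<Rightarrow> int)" where
  "b_flip N b yz = (\<lambda>i. if yz i then (- b i) mod int N else b i)"

end

theory Submission
  imports Defs
begin

lemma card_Suc_filter:
  "card {i. i < Suc n \<and> P i} = card {i. i < n \<and> P i} + (if P n then 1 else 0)"
proof -
  have e: "{i. i < Suc n \<and> P i} = {i. i < n \<and> P i} \<union> (if P n then {n} else {})"
    by (auto simp: less_Suc_eq)
  show ?thesis unfolding e by (auto simp: card_insert_if)
qed

lemma bdot_bxor: "bdot n v (bxor x y) = (bdot n v x \<noteq> bdot n v y)"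
proof (induction n)
  case 0 then show ?case by (simp add: bdot_def)
next
  case (Suc n)
  then show ?case unfolding bdot_def bxor_def card_Suc_filter by auto
qed

lemma bdot_comm: "bdot n x y = bdot n y x"
  unfolding bdot_def by (simp add: conj_commute)

lemma bdot_False[simp]: "bdot n (\<lambda>_. False) y = False"
  unfolding bdot_def by simp

lemma bxor_bvec: "x \<in> bvec n \<Longrightarrow> y \<in> bvec n \<Longrightarrow> bxor x y \<in> bvec n"
  unfolding bvec_def bxor_def by auto

lemma bxor_bvec_iff: "y \<in> bvec n \<Longrightarrow> bxor x y \<in> bvec n \<longleftrightarrow> x \<in> bvec n"
  unfolding bvec_def bxor_def by auto

lemma bxor_cancel[simp]: "bxor (bxor x y) y = x"
  unfolding bxor_def by auto

lemma bxor_ac: "bxor (bxor y u) z = bxor (bxor y z) u"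
  unfolding bxor_def by auto

lemma sgn_sq[simp]: "sgn_bool b * sgn_bool b = 1"
  unfolding sgn_bool_def by auto

lemma sgn_neq: "sgn_bool (a \<noteq> b) = sgn_bool a * sgn_bool b"
  unfolding sgn_bool_def by auto

definition Wm :: "nat \<Rightarrow> (nat \<Rightarrow> bool) \<Rightarrow> (nat \<Rightarrow> bool) \<Rightarrow> complex
   \<Rightarrow> ((nat \<Rightarrow> bool) \<Rightarrow> complex) \<Rightarrow> ((nat \<Rightarrow> bool) \<Rightarrow> complex)" where
  "Wm n yx yz c \<psi> = (\<lambda>y. if y \<in> bvec n then c * sgn_bool (bdot n yx y) * \<psi> (bxor y yz) else 0)"

definition Wi :: "nat \<Rightarrow> (nat \<Rightarrow> bool) \<Rightarrow> (nat \<Rightarrow> bool) \<Rightarrow> complex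
   \<Rightarrow> ((nat \<Rightarrow> bool) \<Rightarrow> complex) \<Rightarrow> ((nat \<Rightarrow> bool) \<Rightarrow> complex)" where
  "Wi n yx yz c \<psi> = (\<lambda>y. if y \<in> bvec n then inverse c * sgn_bool (bdot n yx (bxor y yz)) * \<psi> (bxor y yz) else 0)"

lemma Wi_Wm: "c \<noteq> 0 \<Longrightarrow> yz \<in> bvec n \<Longrightarrow> \<psi> \<in> hspace n \<Longrightarrow> Wi n yx yz c (Wm n yx yz c \<psi>) = \<psi>"
proof (rule ext)
  fix y assume c: "c \<noteq> 0" and yz: "yz \<in> bvec n" and p: "\<psi> \<in> hspace n"
  show "Wi n yx yz c (Wm n yx yz c \<psi>) y = \<psi> y"
  proof (cases "y \<in> bvec n")
    case False then show ?thesis using p unfolding Wi_def hspace_def by simp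
  next
    case True
    then have "bxor y yz \<in> bvec n" using yz by (simp add: bxor_bvec_iff)
    then have "Wi n yx yz c (Wm n yx yz c \<psi>) y = (inverse c * c) * (sgn_bool (bdot n yx (bxor y yz)) * sgn_bool (bdot n yx (bxor y yz))) * \<psi> y"
      using True unfolding Wi_def Wm_def by (simp add: ac_simps)
    then show ?thesis using c by simp
  qed
qed

lemma Wm_Wi: "c \<noteq> 0 \<Longrightarrow> yz \<in> bvec n \<Longrightarrow> \<psi> \<in> hspace n \<Longrightarrow> Wm n yx yz c (Wi n yx yz c \<psi>) = \<psi>"
proof (rule ext)
  fix y assume c: "c \<noteq> 0" and yz: "yz \<in> bvec n" and p: "\<psi> \<in> hspace n"
  show "Wm n yx yz c (Wi n yx yz c \<psi>) y = \<psi> y"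
  proof (cases "y \<in> bvec n")
    case False then show ?thesis using p unfolding Wm_def hspace_def by simp
  next
    case True
    then have "bxor y yz \<in> bvec n" using yz by (simp add: bxor_bvec_iff)
    then have "Wm n yx yz c (Wi n yx yz c \<psi>) y = (c * inverse c) * (sgn_bool (bdot n yx y) * sgn_bool (bdot n yx y)) * \<psi> y"
      using True unfolding Wi_def Wm_def by (simp add: ac_simps)
    then show ?thesis using c by simp
  qed
qed

lemma Wm_hspace: "Wm n yx yz c \<psi> \<in> hspace n"
  unfolding Wm_def hspace_def by auto

lemma Wi_hspace: "Wi n yx yz c \<psi> \<in> hspace n"
  unfolding Wi_def hspace_def by auto

lemma stab_hspace: "stab_op n yx yz u v \<psi> \<in> hspace n"
  unfolding stab_op_def hspace_def by auto

lemma stab_Wm: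
  assumes "u \<in> bvec n" "yz \<in> bvec n"
  shows "stab_op n yx yz u v (Wm n yx yz c \<psi>) = Wm n yx yz c (stab_op n (\<lambda>_. False) (\<lambda>_. False) u v \<psi>)"
proof (rule ext)
  fix y
  show "stab_op n yx yz u v (Wm n yx yz c \<psi>) y = Wm n yx yz c (stab_op n (\<lambda>_. False) (\<lambda>_. False) u v \<psi>) y"
  proof (cases "y \<in> bvec n")
    case False then show ?thesis unfolding stab_op_def Wm_def by simp
  next
    case True
    have b1: "bxor y u \<in> bvec n" "bxor y yz \<in> bvec n" using True assms by (auto intro: bxor_bvec)
    show ?thesis using True b1
      unfolding stab_op_def Wm_def
      apply (simp add: bxor_ac[of y u yz] bdot_bxor sgn_neq bdot_comm[of n yz v])
      apply (simp add: sgn_bool_def)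
      done
  qed
qed

lemma css_eq:
  assumes "c \<noteq> 0" "C2 \<subseteq> bvec n" "yz \<in> bvec n"
  shows "css_code n C1 C2 yx yz = Wm n yx yz c ` css_code n C1 C2 (\<lambda>_. False) (\<lambda>_. False)"
proof
  show "Wm n yx yz c ` css_code n C1 C2 (\<lambda>_. False) (\<lambda>_. False) \<subseteq> css_code n C1 C2 yx yz"
  proof
    fix \<phi> assume "\<phi> \<in> Wm n yx yz c ` css_code n C1 C2 (\<lambda>_. False) (\<lambda>_. False)"
    then obtain \<psi> where p: "\<psi> \<in> css_code n C1 C2 (\<lambda>_. False) (\<lambda>_. False)" and ph: "\<phi> = Wm n yx yz c \<psi>"
      by auto
    show "\<phi> \<in> css_code n C1 C2 yx yz"
      unfolding css_code_def
    proof (intro CollectI conjI ballI)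
      show "\<phi> \<in> hspace n" using ph Wm_hspace by simp
      fix u v assume u: "u \<in> C2" and v: "v \<in> dual_code n C1"
      have "u \<in> bvec n" using u assms by auto
      then show "stab_op n yx yz u v \<phi> = \<phi>"
        using p u v unfolding ph by (simp add: stab_Wm assms css_code_def)
    qed
  qed
next
  show "css_code n C1 C2 yx yz \<subseteq> Wm n yx yz c ` css_code n C1 C2 (\<lambda>_. False) (\<lambda>_. False)"
  proof
    fix \<phi> assume p: "\<phi> \<in> css_code n C1 C2 yx yz"
    then have ph: "\<phi> \<in> hspace n" unfolding css_code_def by auto
    have "Wi n yx yz c \<phi> \<in> css_code n C1 C2 (\<lambda>_. False) (\<lambda>_. False)"
      unfolding css_code_def
    proof (intro CollectI conjI ballI)
      show "Wi n yx yz c \<phi> \<in> hspace n" by (rule Wi_hspace)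
      fix u v assume u: "u \<in> C2" and v: "v \<in> dual_code n C1"
      have ub: "u \<in> bvec n" using u assms by auto
      have "Wm n yx yz c (stab_op n (\<lambda>_. False) (\<lambda>_. False) u v (Wi n yx yz c \<phi>))
          = stab_op n yx yz u v (Wm n yx yz c (Wi n yx yz c \<phi>))"
        using stab_Wm[OF ub assms(3)] by simp
      also have "\<dots> = \<phi>" using Wm_Wi[OF assms(1,3) ph] p u v unfolding css_code_def by simp
      finally have "Wi n yx yz c (Wm n yx yz c (stab_op n (\<lambda>_. False) (\<lambda>_. False) u v (Wi n yx yz c \<phi>)))
          = Wi n yx yz c \<phi>" by simp
      then show "stab_op n (\<lambda>_. False) (\<lambda>_. False) u v (Wi n yx yz c \<phi>) = Wi n yx yz c \<phi>"
        using Wi_Wm[OF assms(1,3) stab_hspace] by simp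
    qed
    moreover have "\<phi> = Wm n yx yz c (Wi n yx yz c \<phi>)" using Wm_Wi[OF assms(1,3) ph] by simp
    ultimately show "\<phi> \<in> Wm n yx yz c ` css_code n C1 C2 (\<lambda>_. False) (\<lambda>_. False)" by blast
  qed
qed

lemma omega_nz: "omega N \<noteq> 0"
  unfolding omega_def by simp

lemma omega_dvd:
  assumes "N > 0" "int N dvd (k - k')"
  shows "omega N powi k = omega N powi k'"
proof -
  obtain m where m: "k = k' + int N * m" using assms(2) by (metis dvd_def diff_eq_eq add.commute)
  have "omega N ^ N = 1" unfolding omega_def using assms(1) by (simp add: DeMoivre)
  then have "omega N powi (int N * m) = 1" by (simp add: power_int_mult power_int_power'[symmetric]
     flip: power_int_of_nat)
  then show ?thesis unfolding m using omega_nz by (simp add: power_int_add)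
qed

lemma sum_filter: fixes n :: nat shows "(\<Sum>i\<in>{i. i < n \<and> x i}. f i) = (\<Sum>i<n. if x i then f i else (0::int))"
proof -
  have "(\<Sum>i\<in>{i. i < n \<and> x i}. f i) = (\<Sum>i\<in>{i \<in> {..<n}. x i}. f i)"
    by (rule sum.cong) auto
  also have "\<dots> = (\<Sum>i<n. if x i then f i else 0)"
    by (rule sum.inter_filter) simp
  finally show ?thesis .
qed

lemma U_Wm:
  assumes "N > 0"
  shows "U_op N n b (Wm n yx yz c \<psi>) =
    Wm n yx yz (c * omega N powi (\<Sum>i\<in>{i. i < n \<and> yz i}. b i)) (U_op N n (b_flip N b yz) \<psi>)"
proof (rule ext)
  fix y
  let ?S = "\<lambda>x. (\<Sum>i\<in>{i. i < n \<and> x i}. b i)"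
  let ?S' = "\<lambda>x. (\<Sum>i\<in>{i. i < n \<and> x i}. b_flip N b yz i)"
  have dv: "int N dvd (?S y - (?S yz + ?S' (bxor y yz)))"
  proof -
    have "?S y - (?S yz + ?S' (bxor y yz)) = (\<Sum>i<n. (if y i then b i else 0) - (if yz i then b i else 0)
       - (if bxor y yz i then b_flip N b yz i else 0))"
      unfolding sum_filter by (simp add: sum_subtractf)
    also have "int N dvd \<dots>"
    proof (rule dvd_sum)
      fix i
      show "int N dvd (if y i then b i else 0) - (if yz i then b i else 0)
       - (if bxor y yz i then b_flip N b yz i else 0)"
        using dvd_minus_mod[of "- b i" "int N"]
        by (auto simp: bxor_def b_flip_def)
    qed
    finally show ?thesis .
  qed
  have "omega N powi ?S y = omega N powi ?S yz * omega N powi ?S' (bxor y yz)"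
    using omega_dvd[OF assms dv] omega_nz by (simp add: power_int_add)
  then show "U_op N n b (Wm n yx yz c \<psi>) y =
    Wm n yx yz (c * omega N powi ?S yz) (U_op N n (b_flip N b yz) \<psi>) y"
    unfolding U_op_def Wm_def by (simp add: ac_simps)
qed

lemma abstract_img:
  assumes B1: "B = Ma ` A" and B2: "B = Mb ` A"
    and inv: "\<And>x. x \<in> H \<Longrightarrow> Mc (Mb x) = x"
    and AH: "A \<subseteq> H" and UH: "U' ` A \<subseteq> H"
    and comm: "\<And>x. x \<in> A \<Longrightarrow> U (Ma x) = Mb (U' x)"
  shows "U ` B = B \<longleftrightarrow> U' ` A = A"
proof -
  have e: "U ` B = Mb ` U' ` A" unfolding B1 image_image using comm by (auto simp: image_iff)
  have r: "Mc ` Mb ` X = X" if "X \<subseteq> H" for X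
    using that inv by (force simp: image_image)
  show ?thesis
  proof
    assume "U ` B = B"
    then have "Mb ` U' ` A = Mb ` A" using e B2 by simp
    then have "Mc ` Mb ` U' ` A = Mc ` Mb ` A" by simp
    then show "U' ` A = A" using r[OF UH] r[OF AH] by simp
  next
    assume "U' ` A = A"
    then show "U ` B = B" using e B2 by simp
  qed
qed

theorem proposition2p7:
  fixes l n :: nat and N :: nat and C1 C2 :: "(nat \<Rightarrow> bool) set"
    and yx yz :: "nat \<Rightarrow> bool" and b :: "nat \<Rightarrow> int"
  assumes "l \<ge> 1" and "N = 2 ^ l"
    and "linear_code n C1" and "linear_code n C2" and "C2 \<subseteq> C1"
    and "yx \<in> bvec n" and "yz \<in> bvec n"
    and "\<forall>i<n. b i \<in> {0..<int N}"
  shows "U_op N n b ` css_code n C1 C2 yx yz = css_code n C1 C2 yx yz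
     \<longleftrightarrow> U_op N n (b_flip N b yz) ` css_code n C1 C2 (\<lambda>_. False) (\<lambda>_. False)
           = css_code n C1 C2 (\<lambda>_. False) (\<lambda>_. False)"
proof -
  have N0: "N > 0" using assms(2) by simp
  have C2b: "C2 \<subseteq> bvec n" using assms(4) unfolding linear_code_def by auto
  define d where "d = omega N powi (\<Sum>i\<in>{i. i < n \<and> yz i}. b i)"
  have d0: "d \<noteq> 0" unfolding d_def using omega_nz by simp
  show ?thesis
  proof (rule abstract_img[where Ma = "Wm n yx yz 1" and Mb = "Wm n yx yz (1 * d)"
        and Mc = "Wi n yx yz (1 * d)" and H = "hspace n"])
    show "css_code n C1 C2 yx yz = Wm n yx yz 1 ` css_code n C1 C2 (\<lambda>_. False) (\<lambda>_. False)"
      by (rule css_eq[OF _ C2b assms(7)]) simp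
    show "css_code n C1 C2 yx yz = Wm n yx yz (1 * d) ` css_code n C1 C2 (\<lambda>_. False) (\<lambda>_. False)"
      by (rule css_eq[OF _ C2b assms(7)]) (simp add: d0)
    show "\<And>x. x \<in> hspace n \<Longrightarrow> Wi n yx yz (1 * d) (Wm n yx yz (1 * d) x) = x"
      using Wi_Wm[OF _ assms(7)] d0 by simp
    show "css_code n C1 C2 (\<lambda>_. False) (\<lambda>_. False) \<subseteq> hspace n"
      unfolding css_code_def by auto
    show "U_op N n (b_flip N b yz) ` css_code n C1 C2 (\<lambda>_. False) (\<lambda>_. False) \<subseteq> hspace n"
      unfolding css_code_def hspace_def U_op_def by auto
    show "\<And>x. U_op N n b (Wm n yx yz 1 x) = Wm n yx yz (1 * d) (U_op N n (b_flip N b yz) x)"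
      unfolding d_def by (rule U_Wm[OF N0])
  qed
qed

end
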